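(* Let $G$ be any game state and let $P$ be a game path starting at $G$ which does not follow the Split-First Strategy. Then either there exists a game path starting at $G$ that is strictly longer than $P$, or there exists a game path starting at $G$ that follows the Split-First Strategy and has the same length as $P$.
   Context: Fibonacci numbers are indexed by $F_1=1$, $F_2=2$, $F_{i+1}=F_i+F_{i-1}$. A game state is a finite multiset of Fibonacci numbers (tracked by index). The legal moves are: $C_1$: replace $F_1,F_1$ by $F_2$; for $i\ge 2$, $C_i$: replace $F_{i-1},F_i$ by $F_{i+1}$ (a "combining move"); $S_2$: replace $F_2,F_2$ by $F_1,F_3$; for $i\ge 3$, $S_i$: replace $F_i,F_i$ by $F_{i-2},F_{i+1}$ (a "splitting move"). Here $C_1$ is grouped with the splitting moves, and "combining move" means $C_i$ with $i\ge 2$. Every sequence of legal moves is finite. A game path from a state $G$ is a sequence of legal moves starting at $G$ and continuing until no legal move is available; its length is its number of moves. A game path follows the Split-First Strategy if at each state along it: whenever some splitting move or $C_1$ is available, the move taken is one of those (any choice); otherwise the move taken is the combining move $C_i$ ($i\ge 2$) with the smallest index $i$ among those available. *)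

theory Defs
  imports Main "HOL-Library.Multiset"
begin

text \<open>A game state is a finite multiset of Fibonacci numbers, tracked by their
indices (index i stands for F_i, with F_1 = 1, F_2 = 2); all indices are at least 1.\<close>

definition valid_state :: "nat multiset \<Rightarrow> bool" where
  "valid_state G \<longleftrightarrow> (\<forall>i \<in># G. 1 \<le> i)"

datatype move = Comb nat | Split nat

text \<open>Legality of moves. Comb 1 is C_1 (F_1,F_1 to F_2); Comb i for i>=2 is C_i
(F_(i-1),F_i to F_(i+1)); Split 2 is S_2 (F_2,F_2 to F_1,F_3); Split i for i>=3 is S_i
(F_i,F_i to F_(i-2),F_(i+1)).\<close>

fun legal :: "move \<Rightarrow> nat multiset \<Rightarrow> bool" where
  "legal (Comb i) G = (if i = 1 then 2 \<le> count G 1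
                       else 2 \<le> i \<and> 1 \<le> count G (i - 1) \<and> 1 \<le> count G i)"
| "legal (Split i) G = (2 \<le> i \<and> 2 \<le> count G i)"

fun apply_move :: "move \<Rightarrow> nat multiset \<Rightarrow> nat multiset" where
  "apply_move (Comb i) G = (if i = 1 then G - {#1, 1#} + {#2#}
                            else G - {#i - 1, i#} + {#i + 1#})"
| "apply_move (Split i) G = (if i = 2 then G - {#2, 2#} + {#1, 3#}
                             else G - {#i, i#} + {#i - 2, i + 1#})"

definition split_type :: "move \<Rightarrow> bool" where
  "split_type m \<longleftrightarrow> m = Comb 1 \<or> (\<exists>i. m = Split i)"

definition combining :: "move \<Rightarrow> bool" where
  "combining m \<longleftrightarrow> (\<exists>i. 2 \<le> i \<and> m = Comb i)"

definition terminal :: "nat multiset \<Rightarrow> bool" where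
  "terminal G \<longleftrightarrow> (\<forall>m. \<not> legal m G)"

definition states :: "nat multiset \<Rightarrow> move list \<Rightarrow> nat \<Rightarrow> nat multiset" where
  "states G ms k = fold apply_move (take k ms) G"

definition game_path :: "nat multiset \<Rightarrow> move list \<Rightarrow> bool" where
  "game_path G ms \<longleftrightarrow>
     (\<forall>k < length ms. legal (ms ! k) (states G ms k)) \<and>
     terminal (states G ms (length ms))"

definition split_first_move :: "nat multiset \<Rightarrow> move \<Rightarrow> bool" where
  "split_first_move H m \<longleftrightarrow>
     (if \<exists>m'. split_type m' \<and> legal m' H
      then split_type m \<and> legal m H
      else (\<exists>i. m = Comb i \<and> 2 \<le> i \<and> legal (Comb i) H \<and>
                (\<forall>j. 2 \<le> j \<and> legal (Comb j) H \<longrightarrow> i \<le> j)))"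

definition follows_split_first :: "nat multiset \<Rightarrow> move list \<Rightarrow> bool" where
  "follows_split_first G ms \<longleftrightarrow>
     (\<forall>k < length ms. split_first_move (states G ms k) (ms ! k))"

end

theory Submission
  imports Defs
begin

fun cns :: "move \<Rightarrow> nat multiset" where
  "cns (Comb i) = (if i = 1 then {#1, 1#} else {#i - 1, i#})"
| "cns (Split i) = {#i, i#}"

fun prd :: "move \<Rightarrow> nat multiset" where
  "prd (Comb i) = {#i + 1#}"
| "prd (Split i) = (if i = 2 then {#1, 3#} else {#i - 2, i + 1#})"

fun okm :: "move \<Rightarrow> bool" where
  "okm (Comb i) = (1 \<le> i)"
| "okm (Split i) = (2 \<le> i)"

lemma apply_eq: "apply_move m G = G - cns m + prd m"
  by (cases m) auto

lemma sub_aa: "{#a, a#} \<subseteq># G \<longleftrightarrow> 2 \<le> count G a"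
  by (auto simp: subseteq_mset_def)

lemma sub_ab: "a \<noteq> b \<Longrightarrow> {#a, b#} \<subseteq># G \<longleftrightarrow> 1 \<le> count G a \<and> 1 \<le> count G b"
  by (auto simp: subseteq_mset_def)

lemma legal_iff: "legal m G \<longleftrightarrow> okm m \<and> cns m \<subseteq># G"
proof (cases m)
  case (Comb i)
  show ?thesis
  proof (cases "i = 0")
    case True then show ?thesis using Comb by simp
  next
    case False
    then show ?thesis using Comb
      by (cases "i = 1") (auto simp: sub_aa sub_ab)
  qed
next
  case (Split i)
  then show ?thesis by (auto simp: sub_aa)
qed

lemma states_0[simp]: "states G ms 0 = G"
  by (simp add: states_def)

lemma states_Suc[simp]: "states G (m # ms) (Suc k) = states (apply_move m G) ms k"
  by (simp add: states_def)

lemma gp_Nil: "game_path G [] \<longleftrightarrow> terminal G"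
  by (simp add: game_path_def)

lemma gp_Cons: "game_path G (m # ms) \<longleftrightarrow> legal m G \<and> game_path (apply_move m G) ms"
  unfolding game_path_def
  by (auto simp: less_Suc_eq_0_disj)

lemma fsf_Nil: "follows_split_first G []"
  by (simp add: follows_split_first_def)

lemma fsf_Cons: "follows_split_first G (m # ms) \<longleftrightarrow>
   split_first_move G m \<and> follows_split_first (apply_move m G) ms"
  unfolding follows_split_first_def
  by (auto simp: less_Suc_eq_0_disj)

fun lseq :: "nat multiset \<Rightarrow> move list \<Rightarrow> bool" where
  "lseq G [] = True"
| "lseq G (m # ms) = (legal m G \<and> lseq (apply_move m G) ms)"

lemma gp_append: "lseq G w \<Longrightarrow> game_path (fold apply_move w G) ms \<Longrightarrow> game_path G (w @ ms)"
  by (induction w arbitrary: G) (auto simp: gp_Cons)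

lemma sfm_legal: "split_first_move H m \<Longrightarrow> legal m H"
  unfolding split_first_move_def by (auto split: if_splits)

definition fw :: "nat \<Rightarrow> nat" where "fw x = (if x \<le> 1 then 0 else x)"

definition mu :: "nat multiset \<Rightarrow> nat" where
  "mu H = 3 * size H + sum_mset (image_mset fw H)"

lemma mu_add: "mu (A + B) = mu A + mu B"
  by (simp add: mu_def)

lemma mu_cp: "okm m \<Longrightarrow> mu (prd m) < mu (cns m)"
  by (cases m) (auto simp: mu_def fw_def)

lemma mu_dec: "legal m H \<Longrightarrow> mu (apply_move m H) < mu H"
proof -
  assume l: "legal m H"
  then have ok: "okm m" and sub: "cns m \<subseteq># H" by (auto simp: legal_iff)
  obtain R where R: "H = cns m + R" using sub by (metis subset_mset.le_iff_add)
  have "apply_move m H = R + prd m" unfolding apply_eq R by simp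
  then show ?thesis using mu_cp[OF ok] R by (simp add: mu_add)
qed

lemma commute:
  assumes "okm a" "okm b" "cns a + cns b \<subseteq># X"
  shows "legal b (apply_move a X) \<and> apply_move b (apply_move a X) = apply_move a (apply_move b X)"
proof -
  obtain R where R: "X = cns a + cns b + R" using assms(3) by (metis subset_mset.le_iff_add)
  have e1: "apply_move a X = cns b + R + prd a" unfolding apply_eq R
    by (simp add: add.assoc)
  have e2: "apply_move b X = cns a + R + prd b" unfolding apply_eq R
    by (metis add.assoc add.commute add_diff_cancel_left')
  show ?thesis using assms(2) unfolding legal_iff e1 e2
    by (simp add: apply_eq add.assoc add.commute add.left_commute)
qed

lemma res1: "2 \<le> count B (k+3) \<Longrightarrow> 1 \<le> count B (k+2) \<Longrightarrow>
  lseq (apply_move (Split (k+3)) B) [Comb (k+2)] \<and>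
  fold apply_move [Comb (k+2)] (apply_move (Split (k+3)) B) = apply_move (Comb (k+3)) B"
  unfolding multiset_eq_iff by (simp add: eval_nat_numeral)

lemma res2: "2 \<le> count B (k+3) \<Longrightarrow> 1 \<le> count B (k+4) \<Longrightarrow>
  lseq (apply_move (Split (k+3)) B) [Split (k+4), Comb (k+2)] \<and>
  fold apply_move [Split (k+4), Comb (k+2)] (apply_move (Split (k+3)) B) = apply_move (Comb (k+4)) B"
  unfolding multiset_eq_iff by (simp add: eval_nat_numeral)

lemma res3: "2 \<le> count B 2 \<Longrightarrow> 1 \<le> count B 1 \<Longrightarrow>
  lseq (apply_move (Split 2) B) [Comb 1] \<and>
  fold apply_move [Comb 1] (apply_move (Split 2) B) = apply_move (Comb 2) B"
  unfolding multiset_eq_iff by (simp add: eval_nat_numeral)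

lemma res4: "2 \<le> count B 2 \<Longrightarrow> 1 \<le> count B 3 \<Longrightarrow>
  lseq (apply_move (Split 2) B) [Split 3, Comb 1] \<and>
  fold apply_move [Split 3, Comb 1] (apply_move (Split 2) B) = apply_move (Comb 3) B"
  unfolding multiset_eq_iff by (simp add: eval_nat_numeral)

lemma res5: "2 \<le> count B 1 \<Longrightarrow> 1 \<le> count B 2 \<Longrightarrow>
  lseq (apply_move (Comb 1) B) [Split 2] \<and>
  fold apply_move [Split 2] (apply_move (Comb 1) B) = apply_move (Comb 2) B"
  unfolding multiset_eq_iff by (simp add: eval_nat_numeral)

lemma res6: "1 \<le> count B (k+1) \<Longrightarrow> 1 \<le> count B (k+2) \<Longrightarrow> 1 \<le> count B (k+3) \<Longrightarrow>
  legal (Split (k+3)) (apply_move (Comb (k+2)) B) \<and>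
  apply_move (Split (k+3)) (apply_move (Comb (k+2)) B) = apply_move (Comb (k+3)) B"
  unfolding multiset_eq_iff by (simp add: eval_nat_numeral)

lemma disj_sub: "A \<subseteq># B \<Longrightarrow> C \<subseteq># B \<Longrightarrow> (\<And>x. x \<in># A \<Longrightarrow> x \<notin># C) \<Longrightarrow> A + C \<subseteq># B"
  unfolding subseteq_mset_def
  by (metis add.right_neutral add_0 count_eq_zero_iff count_union)

lemma overlap: "A \<subseteq># B \<Longrightarrow> C \<subseteq># B \<Longrightarrow> \<not> A + C \<subseteq># B \<Longrightarrow> \<exists>x. x \<in># A \<and> x \<in># C"
  using disj_sub by blast

lemma cnt_legal_comb: "legal (Comb i) B \<Longrightarrow> 2 \<le> i \<Longrightarrow> 1 \<le> count B (i-1) \<and> 1 \<le> count B i"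
  by simp

lemma exw: "lseq X w \<and> fold apply_move w X = Y \<Longrightarrow> w \<noteq> [] \<Longrightarrow>
   \<exists>w. 1 \<le> length w \<and> lseq X w \<and> fold apply_move w X = Y"
  by (intro exI[of _ w]) (cases w, auto)

lemma resolve_split:
  assumes st: "split_type c" and lc: "legal c B" and lr: "legal r B" and ne: "r \<noteq> c"
    and nc: "\<not> cns c + cns r \<subseteq># B"
  shows "\<exists>w. 1 \<le> length w \<and> lseq (apply_move c B) w \<and> fold apply_move w (apply_move c B) = apply_move r B"
proof -
  have "cns c \<subseteq># B" "cns r \<subseteq># B" using lc lr by (auto simp: legal_iff)
  then obtain x where xc: "x \<in># cns c" and xr: "x \<in># cns r"
    using overlap[OF _ _ nc] by blast
  show ?thesis
  proof (cases "c = Comb 1")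
    case True
    then have x1: "x = 1" using xc by simp
    have c1: "2 \<le> count B 1" using lc True by simp
    show ?thesis
    proof (cases r)
      case (Comb i)
      have "i \<noteq> 1" using ne True Comb by simp
      moreover have "1 \<le> i" using lr Comb by (auto split: if_splits)
      ultimately have i2: "i = 2" using xr x1 Comb by (auto split: if_splits)
      then have "1 \<le> count B 2" using lr Comb by simp
      then show ?thesis unfolding True Comb i2 by (rule exw[OF res5[OF c1]]) simp
    next
      case (Split i)
      then show ?thesis using xr x1 lr by simp
    qed
  next
    case False
    then obtain j where cj: "c = Split j" using st unfolding split_type_def by blast
    then have j2: "2 \<le> j" and cjj: "2 \<le> count B j" using lc by auto
    have xj: "x = j" using xc cj by simp
    show ?thesis
    proof (cases r)
      case (Split i)
      then show ?thesis using xr xj ne cj by simp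
    next
      case (Comb i)
      have i1: "i \<noteq> 1" using xr xj j2 Comb by (auto split: if_splits)
      then have ij: "i = j \<or> i = j + 1" using xr xj Comb by (auto split: if_splits)
      have i2: "2 \<le> i" using i1 lr Comb by (cases "i = 0") auto
      then have ci: "1 \<le> count B (i-1)" "1 \<le> count B i" using lr Comb by auto
      show ?thesis
      proof (cases "j = 2")
        case True
        show ?thesis
        proof (cases "i = j")
          case True
          then have "i = 2" "1 \<le> count B 1" using ci \<open>j = 2\<close> by auto
          then show ?thesis unfolding cj Comb \<open>j = 2\<close> \<open>i = 2\<close>
            using cjj \<open>j = 2\<close> by (intro exw[OF res3]) auto
        next
          case False
          then have "i = 3" using ij \<open>j = 2\<close> by simp
          then have "1 \<le> count B 3" using ci by simp
          then show ?thesis unfolding cj Comb \<open>j = 2\<close> \<open>i = 3\<close>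
            using cjj \<open>j = 2\<close> by (intro exw[OF res4]) auto
        qed
      next
        case False
        then obtain k where k: "j = k + 3" using j2
          by (metis add.commute le_Suc_ex le_antisym not_less_eq_eq numeral_2_eq_2 numeral_3_eq_3 plus_1_eq_Suc)
        show ?thesis
        proof (cases "i = j")
          case True
          have "1 \<le> count B (k+2)" using ci True k by simp
          then show ?thesis unfolding cj Comb True k
            using cjj k by (intro exw[OF res1]) auto
        next
          case False
          then have "i = k + 4" using ij k by simp
          then have "1 \<le> count B (k+4)" using ci by simp
          then show ?thesis unfolding cj Comb k \<open>i = k + 4\<close>
            using cjj k by (intro exw[OF res2]) auto
        qed
      qed
    qed
  qed
qed

lemma lseq_fold_gp: "lseq X w \<Longrightarrow> fold apply_move w X = Y \<Longrightarrow> game_path Y ms \<Longrightarrow> game_path X (w @ ms)"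
  using gp_append by blast

lemma xch:
  assumes res: "\<And>B r. legal c B \<Longrightarrow> legal r B \<Longrightarrow> r \<noteq> c \<Longrightarrow> \<not> cns c + cns r \<subseteq># B \<Longrightarrow>
     \<exists>w. 1 \<le> length w \<and> lseq (apply_move c B) w \<and> fold apply_move w (apply_move c B) = apply_move r B"
  shows "game_path A ms \<Longrightarrow> legal c A \<Longrightarrow> \<exists>T. game_path (apply_move c A) T \<and> length ms \<le> length T + 1"
proof (induction ms arbitrary: A)
  case Nil
  then show ?case by (auto simp: gp_Nil terminal_def)
next
  case (Cons r ms)
  have lr: "legal r A" and gp: "game_path (apply_move r A) ms" using Cons.prems by (auto simp: gp_Cons)
  show ?case
  proof (cases "r = c")
    case True
    then show ?thesis using gp by auto
  next
    case ne: False
    show ?thesis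
    proof (cases "cns c + cns r \<subseteq># A")
      case False
      obtain w where w: "1 \<le> length w" "lseq (apply_move c A) w"
          "fold apply_move w (apply_move c A) = apply_move r A"
        using res[OF Cons.prems(2) lr ne False] by blast
      have "game_path (apply_move c A) (w @ ms)" using lseq_fold_gp[OF w(2,3) gp] .
      then show ?thesis using w(1) by (intro exI[of _ "w @ ms"]) auto
    next
      case True
      have okc: "okm c" and okr: "okm r" using Cons.prems(2) lr by (auto simp: legal_iff)
      have cm1: "legal c (apply_move r A) \<and> apply_move c (apply_move r A) = apply_move r (apply_move c A)"
        using commute[OF okr okc] True by (simp add: add.commute)
      have cm2: "legal r (apply_move c A)"
        using commute[OF okc okr True] by simp
      obtain T where T: "game_path (apply_move c (apply_move r A)) T" "length ms \<le> length T + 1"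
        using Cons.IH[OF gp] cm1 by blast
      have "game_path (apply_move c A) (r # T)" using T(1) cm1 cm2 by (simp add: gp_Cons)
      then show ?thesis using T(2) by (intro exI[of _ "r # T"]) auto
    qed
  qed
qed

lemma cntC: "2 \<le> k \<Longrightarrow> legal (Comb k) H \<Longrightarrow> count (apply_move (Comb k) H) x =
   (if x = k - 1 \<or> x = k then count H x - 1 else if x = k + 1 then count H x + 1 else count H x)"
  by auto

lemma ns_count: "\<forall>m. split_type m \<longrightarrow> \<not> legal m H \<Longrightarrow> 1 \<le> x \<Longrightarrow> count H x \<le> 1"
proof -
  assume ns: "\<forall>m. split_type m \<longrightarrow> \<not> legal m H" and x: "1 \<le> x"
  show ?thesis
  proof (cases "x = 1")
    case True
    then show ?thesis using ns[rule_format, of "Comb 1"] by (simp add: split_type_def)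
  next
    case False
    then show ?thesis using x ns[rule_format, of "Split x"] by (simp add: split_type_def)
  qed
qed

lemma CH:
  assumes ns: "\<forall>m. split_type m \<longrightarrow> \<not> legal m H"
    and j2: "2 \<le> j" and lj: "legal (Comb j) H"
    and mn: "\<forall>l. 2 \<le> l \<and> legal (Comb l) H \<longrightarrow> j \<le> l"
  shows "game_path (apply_move (Comb k) H) Q \<Longrightarrow> follows_split_first (apply_move (Comb k) H) Q \<Longrightarrow>
    j + 2 \<le> k \<Longrightarrow> legal (Comb k) H \<Longrightarrow>
    \<exists>T. game_path (apply_move (Comb j) (apply_move (Comb k) H)) T \<and> length Q \<le> length T + 1"
proof (induction Q arbitrary: k)
  case Nil
  define A where "A = apply_move (Comb k) H"
  have k2: "2 \<le> k" using Nil j2 by simp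
  have "legal (Comb j) A" unfolding A_def using lj j2 Nil.prems(3)
    by (simp add: cntC[OF k2 Nil.prems(4)]) arith
  then show ?case using Nil.prems(1) unfolding A_def gp_Nil terminal_def by blast
next
  case (Cons q Q)
  define A where "A = apply_move (Comb k) H"
  have k2: "2 \<le> k" using Cons j2 by simp
  have k4: "4 \<le> k" using Cons j2 by simp
  have cA: "\<And>x. count A x = (if x = k - 1 \<or> x = k then count H x - 1 else if x = k + 1 then count H x + 1 else count H x)"
    unfolding A_def using cntC[OF k2 Cons.prems(4)] by simp
  have sfq: "split_first_move A q" and gpq: "game_path (apply_move q A) Q"
    and fq: "follows_split_first (apply_move q A) Q"
    using Cons.prems(1,2) unfolding A_def by (auto simp: gp_Cons fsf_Cons)
  have lkH: "1 \<le> count H (k-1)" "1 \<le> count H k" using Cons.prems(4) k2 by auto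
  have ljA: "legal (Comb j) A" using lj j2 Cons.prems(3) by (simp add: cA) arith
  show ?case
  proof (cases "1 \<le> count H (k+1)")
    case True
    have ls: "legal (Split (k+1)) A" using True k2 by (simp add: cA)
    then have ex: "\<exists>m'. split_type m' \<and> legal m' A" unfolding split_type_def by blast
    then have "split_type q \<and> legal q A" using sfq unfolding split_first_move_def
      by presburger
    then have qeq: "q = Split (k+1)"
    proof -
      assume a: "split_type q \<and> legal q A"
      show ?thesis
      proof (cases "q = Comb 1")
        case True
        then have "2 \<le> count A 1" using a by simp
        moreover have "count A 1 = count H 1"
        proof -
          have "k - 1 \<noteq> 1" "k \<noteq> 1" "k + 1 \<noteq> 1" using k4 by arith+
          then show ?thesis using cA[of 1] by simp
        qed
        ultimately show ?thesis using ns_count[OF ns, of 1] by simp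
      next
        case False
        then obtain l where l: "q = Split l" using a by (auto simp: split_type_def)
        then have l2: "2 \<le> l" "2 \<le> count A l" using a by auto
        have "count H l \<le> 1" using ns_count[OF ns, of l] l2 by simp
        then have "l = k + 1" using l2 by (auto simp: cA split: if_splits)
        then show ?thesis using l by simp
      qed
    qed
    obtain k' where k': "k = k' + 2" using k2 by (metis add.commute le_Suc_ex)
    have h1: "1 \<le> count H (k'+1)" "1 \<le> count H (k'+2)" "1 \<le> count H (k'+3)"
      using lkH True unfolding k' by (simp_all add: eval_nat_numeral)
    have e0: "apply_move (Split (k'+3)) (apply_move (Comb (k'+2)) H) = apply_move (Comb (k'+3)) H"
      using res6[OF h1] by blast
    have rw: "Split (k+1) = Split (k'+3)" "Comb k = Comb (k'+2)" "Comb (k+1) = Comb (k'+3)"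
      using k' by simp_all
    have e: "apply_move q A = apply_move (Comb (k+1)) H"
      unfolding A_def qeq rw by (rule e0)
    have lk1: "legal (Comb (k+1)) H" using lkH True k2 by simp
    obtain T where T: "game_path (apply_move (Comb j) (apply_move (Comb (k+1)) H)) T"
       "length Q \<le> length T + 1"
      using Cons.IH[of "k+1"] gpq fq e lk1 Cons.prems(3) by auto
    have sub: "cns (Comb j) + cns (Split (k+1)) \<subseteq># A"
      using ljA ls Cons.prems(3) j2 by (intro disj_sub) (auto simp: legal_iff)
    have cm: "legal (Split (k+1)) (apply_move (Comb j) A) \<and>
       apply_move (Split (k+1)) (apply_move (Comb j) A) = apply_move (Comb j) (apply_move (Split (k+1)) A)"
      using commute[OF _ _ sub] j2 k2 by simp
    have "game_path (apply_move (Comb j) A) (Split (k+1) # T)"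
      using cm T(1) e qeq by (simp add: gp_Cons del: apply_move.simps)
    then show ?thesis using T(2) unfolding A_def by (intro exI[of _ "Split (k+1) # T"]) auto
  next
    case False
    have nsA: "\<not> (\<exists>m'. split_type m' \<and> legal m' A)"
    proof
      assume "\<exists>m'. split_type m' \<and> legal m' A"
      then obtain m' where m': "split_type m'" "legal m' A" by blast
      show False
      proof (cases "m' = Comb 1")
        case True
        then have "2 \<le> count A 1" using m' by simp
        moreover have "count A 1 = count H 1"
        proof -
          have "k - 1 \<noteq> 1" "k \<noteq> 1" "k + 1 \<noteq> 1" using k4 by arith+
          then show ?thesis using cA[of 1] by simp
        qed
        ultimately show ?thesis using ns_count[OF ns, of 1] by simp
      next
        case c: False
        then obtain l where l: "m' = Split l" using m' by (auto simp: split_type_def)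
        then have l2: "2 \<le> l" "2 \<le> count A l" using m' by auto
        have "count H l \<le> 1" using ns_count[OF ns, of l] l2 by simp
        then show False using l2 False by (auto simp: cA split: if_splits)
      qed
    qed
    then obtain i where qi: "q = Comb i" "2 \<le> i" "legal (Comb i) A"
        and imin: "\<forall>l. 2 \<le> l \<and> legal (Comb l) A \<longrightarrow> i \<le> l"
    proof -
      have "\<exists>i. q = Comb i \<and> 2 \<le> i \<and> legal (Comb i) A \<and> (\<forall>l. 2 \<le> l \<and> legal (Comb l) A \<longrightarrow> i \<le> l)"
        using sfq unfolding split_first_move_def if_not_P[OF nsA] .
      then show ?thesis using that by blast
    qed
    have "i \<le> j" using imin ljA j2 by blast
    moreover have "\<not> i < j"
    proof
      assume ij: "i < j"
      have ne: "i - 1 \<noteq> k - 1" "i - 1 \<noteq> k" "i - 1 \<noteq> k + 1" "i \<noteq> k - 1" "i \<noteq> k" "i \<noteq> k + 1"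
        using ij Cons.prems(3) by arith+
      have "legal (Comb i) H" using qi ne by (simp add: cA)
      then show False using mn qi ij by auto
    qed
    ultimately have "q = Comb j" using qi by simp
    then show ?thesis using gpq unfolding A_def by (intro exI[of _ Q]) auto
  qed
qed

lemma EX:
  assumes lm: "legal m H" and nsf: "\<not> split_first_move H m"
    and gp: "game_path (apply_move m H) Q" and fs: "follows_split_first (apply_move m H) Q"
  shows "\<exists>m' T. split_first_move H m' \<and> game_path (apply_move m' H) T \<and> length Q \<le> length T"
proof (cases "\<exists>s. split_type s \<and> legal s H")
  case True
  then obtain s where s: "split_type s" "legal s H" by blast
  have sf: "split_first_move H s" using True s unfolding split_first_move_def by simp
  have gpm: "game_path H (m # Q)" using lm gp by (simp add: gp_Cons del: apply_move.simps)
  obtain T where T: "game_path (apply_move s H) T" "length (m # Q) \<le> length T + 1"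
    using xch[of s, OF resolve_split[OF s(1)] gpm s(2)] by blast
  then show ?thesis using sf by (intro exI[of _ s] exI[of _ T]) auto
next
  case False
  then have ns: "\<forall>m. split_type m \<longrightarrow> \<not> legal m H" by blast
  obtain i where mi: "m = Comb i" and i2: "2 \<le> i"
  proof (cases m)
    case (Comb i)
    have "i \<noteq> 1" using ns lm Comb by (auto simp: split_type_def)
    moreover have "i \<noteq> 0" using lm Comb by (auto split: if_splits)
    ultimately show ?thesis using that Comb by simp
  next
    case (Split i)
    then show ?thesis using ns lm by (auto simp: split_type_def)
  qed
  have "\<not> (\<exists>i'. m = Comb i' \<and> 2 \<le> i' \<and> legal (Comb i') H \<and> (\<forall>l. 2 \<le> l \<and> legal (Comb l) H \<longrightarrow> i' \<le> l))"
    using nsf unfolding split_first_move_def if_not_P[OF False] .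
  then obtain l where l: "2 \<le> l" "legal (Comb l) H" "l < i" using mi i2 lm by force
  define j where "j = (LEAST l. 2 \<le> l \<and> legal (Comb l) H)"
  have jP: "2 \<le> j \<and> legal (Comb j) H" unfolding j_def by (rule LeastI[of _ l]) (use l in simp)
  have mn: "\<forall>l. 2 \<le> l \<and> legal (Comb l) H \<longrightarrow> j \<le> l" unfolding j_def by (auto intro: Least_le)
  have ji: "j < i" using mn l by fastforce
  have sfj: "split_first_move H (Comb j)"
    unfolding split_first_move_def if_not_P[OF False] using jP mn by blast
  show ?thesis
  proof (cases "i = j + 1")
    case True
    obtain k' where k': "j = k' + 2" using jP by (metis add.commute le_Suc_ex)
    have h1: "1 \<le> count H (k'+1)" "1 \<le> count H (k'+2)" "1 \<le> count H (k'+3)"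
      using jP lm mi True unfolding k' by (simp_all add: eval_nat_numeral)
    have r6: "legal (Split (k'+3)) (apply_move (Comb (k'+2)) H) \<and>
       apply_move (Split (k'+3)) (apply_move (Comb (k'+2)) H) = apply_move (Comb (k'+3)) H"
      using res6[OF h1] .
    have rw: "Split (k'+3) = Split (j+1)" "Comb (k'+2) = Comb j" "Comb (k'+3) = m"
      using k' mi True by simp_all
    have "game_path (apply_move (Comb j) H) (Split (j+1) # Q)"
      using r6 gp unfolding rw by (simp add: gp_Cons del: apply_move.simps)
    then show ?thesis using sfj by (intro exI[of _ "Comb j"] exI[of _ "Split (j+1) # Q"]) auto
  next
    case False
    then have ji2: "j + 2 \<le> i" using ji by simp
    obtain T where T: "game_path (apply_move (Comb j) (apply_move (Comb i) H)) T" "length Q \<le> length T + 1"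
      using CH[OF ns _ _ mn, of i Q] jP gp fs mi ji2 lm by blast
    have sub: "cns (Comb j) + cns (Comb i) \<subseteq># H"
      using jP lm mi ji2 by (intro disj_sub) (auto simp: legal_iff)
    have cm: "legal (Comb i) (apply_move (Comb j) H) \<and>
       apply_move (Comb i) (apply_move (Comb j) H) = apply_move (Comb j) (apply_move (Comb i) H)"
      using commute[OF _ _ sub] jP i2 by simp
    have "game_path (apply_move (Comb j) H) (Comb i # T)"
      unfolding gp_Cons using cm T(1) by metis
    then show ?thesis using sfj T(2) by (intro exI[of _ "Comb j"] exI[of _ "Comb i # T"]) auto
  qed
qed

lemma main: "game_path H P \<Longrightarrow> \<exists>Q. game_path H Q \<and> follows_split_first H Q \<and> length P \<le> length Q"
proof (induction "mu H" arbitrary: H P rule: less_induct)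
  case less
  show ?case
  proof (cases P)
    case Nil
    then show ?thesis using less.prems fsf_Nil by (intro exI[of _ "[]"]) auto
  next
    case (Cons m P')
    have lm: "legal m H" and gp': "game_path (apply_move m H) P'"
      using less.prems Cons by (auto simp: gp_Cons simp del: apply_move.simps)
    obtain Q' where Q': "game_path (apply_move m H) Q'" "follows_split_first (apply_move m H) Q'"
        "length P' \<le> length Q'"
      using less.hyps[OF mu_dec[OF lm] gp'] by blast
    show ?thesis
    proof (cases "split_first_move H m")
      case True
      then show ?thesis using Q' lm Cons
        by (intro exI[of _ "m # Q'"]) (simp add: gp_Cons fsf_Cons del: apply_move.simps)
    next
      case False
      obtain m' T where T: "split_first_move H m'" "game_path (apply_move m' H) T" "length Q' \<le> length T"
        using EX[OF lm False Q'(1,2)] by blast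
      have lm': "legal m' H" using sfm_legal[OF T(1)] .
      obtain Q'' where Q'': "game_path (apply_move m' H) Q''" "follows_split_first (apply_move m' H) Q''"
        "length T \<le> length Q''"
        using less.hyps[OF mu_dec[OF lm'] T(2)] by blast
      show ?thesis using Q'' T(1) lm' Cons Q'(3) T(3)
        by (intro exI[of _ "m' # Q''"]) (simp add: gp_Cons fsf_Cons del: apply_move.simps)
    qed
  qed
qed

theorem lemma2p3:
  fixes G :: "nat multiset" and P :: "move list"
  assumes "valid_state G"
    and "game_path G P"
    and "\<not> follows_split_first G P"
  shows "(\<exists>Q. game_path G Q \<and> length Q > length P) \<or>
         (\<exists>Q. game_path G Q \<and> follows_split_first G Q \<and> length Q = length P)"
proof -
  obtain Q where Q: "game_path G Q" "follows_split_first G Q" "length P \<le> length Q"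
    using main[OF assms(2)] by blast
  show ?thesis
  proof (cases "length P < length Q")
    case True
    then show ?thesis using Q by blast
  next
    case False
    then show ?thesis using Q by (intro disjI2 exI[of _ Q]) auto
  qed
qed

end
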